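(* Let $A,B>0$, $0<\alpha\le1+\sqrt3$, and $p(x)=\frac{B}{12}[x^4-2A(2+\alpha)x^3+6A^2(1+\alpha)x^2]$. Then there exists $c>0$ independent of $A$ and $B$ such that $p((1+\alpha)A)\ge p(A)\ge cBA^4$. *)

theory Defs
  imports Complex_Main
begin

definition p42 :: "real \<Rightarrow> real \<Rightarrow> real \<Rightarrow> real \<Rightarrow> real" where
  "p42 A B \<alpha> x = B / 12 * (x ^ 4 - 2 * A * (2 + \<alpha>) * x ^ 3 + 6 * A ^ 2 * (1 + \<alpha>) * x ^ 2)"

end

theory Submission
  imports Defs
begin

theorem proposition4p2:
  fixes \<alpha> :: real
  assumes "0 < \<alpha>" and "\<alpha> \<le> 1 + sqrt 3"
  shows "\<exists>c>0. \<forall>A B :: real. A > 0 \<longrightarrow> B > 0 \<longrightarrow>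
           p42 A B \<alpha> ((1 + \<alpha>) * A) \<ge> p42 A B \<alpha> A \<and> p42 A B \<alpha> A \<ge> c * B * A ^ 4"
proof (intro exI[of _ "(3 + 4*\<alpha>)/12"] conjI allI impI)
  show "0 < (3 + 4*\<alpha>)/12" using assms by simp
  define s where "s = sqrt 3"
  have s2: "s * s = 3" unfolding s_def by simp
  have s1: "s > 1" unfolding s_def by simp
  have key0: "(\<alpha>+2)*(\<alpha>-1-s)*(\<alpha>-1+s) \<le> 0"
  proof -
    have "(\<alpha>+2)*(\<alpha>-1+s) \<ge> 0" using assms s1 by simp
    moreover have "\<alpha>-1-s \<le> 0" using assms s_def by simp
    ultimately show ?thesis by (metis mult.commute mult.left_commute mult_nonneg_nonpos)
  qed
  have key: "\<alpha>^3 - 6*\<alpha> - 4 \<le> 0"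
  proof -
    have "(\<alpha>+2)*(\<alpha>-1-s)*(\<alpha>-1+s) = (\<alpha>+2)*((\<alpha>-1)^2 - s*s)" by algebra
    also have "\<dots> = \<alpha>^3 - 6*\<alpha> - 4" using s2 by (simp add: algebra_simps power2_eq_square power3_eq_cube)
    finally show ?thesis using key0 by simp
  qed
  have ineq: "3+4*\<alpha> \<le> (1+\<alpha>)^3*(3-\<alpha>)"
  proof -
    have "(1+\<alpha>)^3*(3-\<alpha>) - (3+4*\<alpha>) = \<alpha> * (-(\<alpha>^3 - 6*\<alpha> - 4))"
      by (simp add: algebra_simps power2_eq_square power3_eq_cube power4_eq_xxxx)
    moreover have "\<alpha> * (-(\<alpha>^3 - 6*\<alpha> - 4)) \<ge> 0" using assms key by simp
    ultimately show ?thesis by linarith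
  qed
  fix A B :: real
  assume A: "A > 0" and B: "B > 0"
  have pA: "p42 A B \<alpha> A = (3 + 4*\<alpha>)/12 * B * A^4"
    unfolding p42_def by (simp add: algebra_simps power2_eq_square power3_eq_cube power4_eq_xxxx)
  have pB: "p42 A B \<alpha> ((1+\<alpha>)*A) = (1+\<alpha>)^3*(3-\<alpha>)/12 * B * A^4"
    unfolding p42_def by (simp add: algebra_simps power2_eq_square power3_eq_cube power4_eq_xxxx)
  have "B * A^4 > 0" using A B by simp
  then have "(3 + 4*\<alpha>)/12 * (B * A^4) \<le> (1+\<alpha>)^3*(3-\<alpha>)/12 * (B * A^4)"
    using ineq by (intro mult_right_mono) auto
  then show "p42 A B \<alpha> A \<le> p42 A B \<alpha> ((1+\<alpha>)*A)" using pA pB by (simp add: mult.assoc)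
  show "(3 + 4*\<alpha>)/12 * B * A^4 \<le> p42 A B \<alpha> A" using pA by simp
qed

end
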